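(* Let $G$ be a finitely generated group, $p$ a prime, $x\in G$, and $k\ge 0$ an integer. Then $RG_p\big(G/\langle\langle x^{p^k}\rangle\rangle\big)\ge RG_p(G)-\frac{1}{p^k}$.
   Context: $\langle\langle y\rangle\rangle$ denotes the normal closure of $y$ in $G$. For a group $A$, $d(A)$ is the minimal number of generators and $d_p(A)=d\big(A/[A,A]A^p\big)$. For a finitely generated group $G$, $RG_p(G)=\inf_H\frac{d_p(H)-1}{[G:H]}$, the infimum over normal subgroups $H\trianglelefteq G$ of $p$-power index. *)

theory Defs
  imports "HOL-Algebra.Algebra" "HOL-Computational_Algebra.Primes" Complex_Main
begin

definition fin_gen :: "('a, 'b) monoid_scheme \<Rightarrow> bool" where
  "fin_gen G \<longleftrightarrow> (\<exists>S. finite S \<and> S \<subseteq> carrier G \<and> generate G S = carrier G)"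

definition min_gens :: "('a, 'b) monoid_scheme \<Rightarrow> nat" where
  "min_gens A = (LEAST n. \<exists>S. finite S \<and> S \<subseteq> carrier A \<and> card S = n \<and> generate A S = carrier A)"

definition comm_pow_subgroup :: "('a, 'b) monoid_scheme \<Rightarrow> nat \<Rightarrow> 'a set" where
  "comm_pow_subgroup A p =
     generate A (derived_set A (carrier A) \<union> {a [^]\<^bsub>A\<^esub> p | a. a \<in> carrier A})"

definition d_p :: "('a, 'b) monoid_scheme \<Rightarrow> nat \<Rightarrow> nat" where
  "d_p A p = min_gens (A Mod comm_pow_subgroup A p)"

definition normal_closure :: "('a, 'b) monoid_scheme \<Rightarrow> 'a set \<Rightarrow> 'a set" where
  "normal_closure G S =
     generate G {g \<otimes>\<^bsub>G\<^esub> y \<otimes>\<^bsub>G\<^esub> inv\<^bsub>G\<^esub> g | g y. g \<in> carrier G \<and> y \<in> S}"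

definition p_power_index :: "('a, 'b) monoid_scheme \<Rightarrow> nat \<Rightarrow> 'a set \<Rightarrow> bool" where
  "p_power_index G p H \<longleftrightarrow> finite (rcosets\<^bsub>G\<^esub> H) \<and> (\<exists>n. card (rcosets\<^bsub>G\<^esub> H) = p ^ n)"

definition RG_p :: "('a, 'b) monoid_scheme \<Rightarrow> nat \<Rightarrow> real" where
  "RG_p G p = Inf {(real (d_p (G\<lparr>carrier := H\<rparr>) p) - 1) / real (card (rcosets\<^bsub>G\<^esub> H)) | H.
                    H \<lhd> G \<and> p_power_index G p H}"

end

theory Submission
  imports Defs
begin


lemma (in group) cancel_l1: "g \<in> carrier G \<Longrightarrow> x \<in> carrier G \<Longrightarrow> inv g \<otimes> (g \<otimes> x) = x"
  by (simp add: m_assoc[symmetric])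
lemma (in group) cancel_l2: "g \<in> carrier G \<Longrightarrow> x \<in> carrier G \<Longrightarrow> g \<otimes> (inv g \<otimes> x) = x"
  by (simp add: m_assoc[symmetric])

lemma (in group) conj_pow:
  assumes "a \<in> carrier G" "g \<in> carrier G"
  shows "g \<otimes> a [^] (n::nat) \<otimes> inv g = (g \<otimes> a \<otimes> inv g) [^] n"
proof (induction n)
  case 0 then show ?case using assms by simp
next
  case (Suc n)
  have "(g \<otimes> a \<otimes> inv g) [^] Suc n = (g \<otimes> a [^] n \<otimes> inv g) \<otimes> (g \<otimes> a \<otimes> inv g)"
    using Suc by simp
  also have "\<dots> = g \<otimes> a [^] Suc n \<otimes> inv g"
    using assms by (simp add: m_assoc cancel_l1 nat_pow_Suc)
  finally show ?case by simp
qed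

lemma (in group) inv_conj:
  assumes "a \<in> carrier G" "g \<in> carrier G"
  shows "inv (g \<otimes> a \<otimes> inv g) = g \<otimes> inv a \<otimes> inv g"
  using assms by (simp add: inv_mult_group m_assoc)

lemma (in group) inv_conj':
  assumes "a \<in> carrier G" "g \<in> carrier G"
  shows "inv (g \<otimes> (a \<otimes> inv g)) = g \<otimes> (inv a \<otimes> inv g)"
  using inv_conj[OF assms] assms by (simp add: m_assoc)

lemma (in group) conj_comm:
  assumes "a \<in> carrier G" "b \<in> carrier G" "g \<in> carrier G"
  shows "g \<otimes> (a \<otimes> b \<otimes> inv a \<otimes> inv b) \<otimes> inv g =
    (g \<otimes> a \<otimes> inv g) \<otimes> (g \<otimes> b \<otimes> inv g) \<otimes> inv (g \<otimes> a \<otimes> inv g) \<otimes> inv (g \<otimes> b \<otimes> inv g)"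
  unfolding inv_conj[OF assms(1,3)] inv_conj[OF assms(2,3)]
  using assms by (simp add: m_assoc cancel_l1)

lemma comm_pow_normal:
  assumes "group A"
  shows "comm_pow_subgroup A p \<lhd> A"
proof -
  interpret group A by fact
  let ?X = "derived_set A (carrier A) \<union> {a [^]\<^bsub>A\<^esub> p | a. a \<in> carrier A}"
  have sub: "?X \<subseteq> carrier A" by auto
  show ?thesis unfolding comm_pow_subgroup_def
  proof (rule normal_generateI[OF sub])
    fix h g assume h: "h \<in> ?X" and g: "g \<in> carrier A"
    show "g \<otimes>\<^bsub>A\<^esub> h \<otimes>\<^bsub>A\<^esub> inv\<^bsub>A\<^esub> g \<in> ?X"
    proof (cases "h \<in> derived_set A (carrier A)")
      case True
      then obtain a b where ab: "a \<in> carrier A" "b \<in> carrier A" "h = a \<otimes>\<^bsub>A\<^esub> b \<otimes>\<^bsub>A\<^esub> inv\<^bsub>A\<^esub> a \<otimes>\<^bsub>A\<^esub> inv\<^bsub>A\<^esub> b"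
        by blast
      have "g \<otimes>\<^bsub>A\<^esub> h \<otimes>\<^bsub>A\<^esub> inv\<^bsub>A\<^esub> g \<in> derived_set A (carrier A)"
        unfolding ab(3) conj_comm[OF ab(1,2) g]
        by (rule UN_I[of "g \<otimes>\<^bsub>A\<^esub> a \<otimes>\<^bsub>A\<^esub> inv\<^bsub>A\<^esub> g"], use ab g in simp,
            rule UN_I[of "g \<otimes>\<^bsub>A\<^esub> b \<otimes>\<^bsub>A\<^esub> inv\<^bsub>A\<^esub> g"], use ab g in simp, simp)
      then show ?thesis by (rule UnI1)
    next
      case False
      then obtain a where a: "a \<in> carrier A" "h = a [^]\<^bsub>A\<^esub> p" using h by blast
      have "g \<otimes>\<^bsub>A\<^esub> h \<otimes>\<^bsub>A\<^esub> inv\<^bsub>A\<^esub> g \<in> {a [^]\<^bsub>A\<^esub> p | a. a \<in> carrier A}"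
        unfolding a(2) conj_pow[OF a(1) g] using a g by blast
      then show ?thesis by (rule UnI2)
    qed
  qed
qed

definition fgen_mod :: "('a,'b) monoid_scheme \<Rightarrow> 'a set \<Rightarrow> nat \<Rightarrow> bool" where
  "fgen_mod A P n \<longleftrightarrow> (\<exists>S. finite S \<and> S \<subseteq> carrier A \<and> card S \<le> n \<and> generate A (S \<union> P) = carrier A)"

definition fgq :: "('a,'b) monoid_scheme \<Rightarrow> bool" where
  "fgq Q \<longleftrightarrow> (\<exists>T. finite T \<and> T \<subseteq> carrier Q \<and> generate Q T = carrier Q)"

lemma gen_img_quot:
  assumes "group A" "P \<lhd> A" "S \<subseteq> carrier A"
  shows "generate (A Mod P) ((\<lambda>a. P #>\<^bsub>A\<^esub> a) ` S) = (\<lambda>a. P #>\<^bsub>A\<^esub> a) ` generate A (S \<union> P)"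
proof -
  interpret A: group A by fact
  interpret N: normal P A by fact
  interpret Q: group "A Mod P" by (rule N.factorgroup_is_group)
  have gh: "group_hom A (A Mod P) (\<lambda>a. P #>\<^bsub>A\<^esub> a)"
    unfolding group_hom_def group_hom_axioms_def
    using N.r_coset_hom_Mod A.group_axioms Q.group_axioms by blast
  have PA: "P \<subseteq> carrier A" using N.subset .
  have one: "\<one>\<^bsub>A\<^esub> \<in> P" by (rule N.one_closed)
  have "(\<lambda>a. P #>\<^bsub>A\<^esub> a) ` P = (\<lambda>a. P) ` P"
    by (rule image_cong[OF refl]) (rule N.rcos_const[OF A.group_axioms])
  also have "\<dots> = {P}" using one by (rule image_constant)
  finally have img: "(\<lambda>a. P #>\<^bsub>A\<^esub> a) ` P = {\<one>\<^bsub>A Mod P\<^esub>}" by simp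
  have SP: "S \<union> P \<subseteq> carrier A" using assms(3) PA by (rule Un_least)
  have "(\<lambda>a. P #>\<^bsub>A\<^esub> a) ` generate A (S \<union> P) = generate (A Mod P) ((\<lambda>a. P #>\<^bsub>A\<^esub> a) ` (S \<union> P))"
    by (rule group_hom.generate_img[OF gh SP, symmetric])
  also have "(\<lambda>a. P #>\<^bsub>A\<^esub> a) ` (S \<union> P) = (\<lambda>a. P #>\<^bsub>A\<^esub> a) ` S \<union> {\<one>\<^bsub>A Mod P\<^esub>}"
    unfolding image_Un img ..
  also have "generate (A Mod P) ((\<lambda>a. P #>\<^bsub>A\<^esub> a) ` S \<union> {\<one>\<^bsub>A Mod P\<^esub>}) = generate (A Mod P) ((\<lambda>a. P #>\<^bsub>A\<^esub> a) ` S)"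
  proof
    have sub: "(\<lambda>a. P #>\<^bsub>A\<^esub> a) ` S \<subseteq> carrier (A Mod P)"
      unfolding carrier_FactGroup using assms(3) by (rule image_mono)
    have "(\<lambda>a. P #>\<^bsub>A\<^esub> a) ` S \<union> {\<one>\<^bsub>A Mod P\<^esub>} \<subseteq> generate (A Mod P) ((\<lambda>a. P #>\<^bsub>A\<^esub> a) ` S)"
    proof (rule Un_least)
      show "(\<lambda>a. P #>\<^bsub>A\<^esub> a) ` S \<subseteq> generate (A Mod P) ((\<lambda>a. P #>\<^bsub>A\<^esub> a) ` S)"
        by (rule subsetI, rule generate.incl)
      show "{\<one>\<^bsub>A Mod P\<^esub>} \<subseteq> generate (A Mod P) ((\<lambda>a. P #>\<^bsub>A\<^esub> a) ` S)"
        using generate.one[of "A Mod P"] by simp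
    qed
    then show "generate (A Mod P) ((\<lambda>a. P #>\<^bsub>A\<^esub> a) ` S \<union> {\<one>\<^bsub>A Mod P\<^esub>}) \<subseteq> generate (A Mod P) ((\<lambda>a. P #>\<^bsub>A\<^esub> a) ` S)"
      by (rule Q.generate_subgroup_incl[OF _ Q.generate_is_subgroup[OF sub]])
    show "generate (A Mod P) ((\<lambda>a. P #>\<^bsub>A\<^esub> a) ` S) \<subseteq> generate (A Mod P) ((\<lambda>a. P #>\<^bsub>A\<^esub> a) ` S \<union> {\<one>\<^bsub>A Mod P\<^esub>})"
      by (rule Q.mono_generate) (rule Un_upper1)
  qed
  finally show ?thesis by (rule sym)
qed

lemma gen_from_img:
  assumes "group A" "P \<lhd> A" "S \<subseteq> carrier A"
    and "(\<lambda>a. P #>\<^bsub>A\<^esub> a) ` generate A (S \<union> P) = carrier (A Mod P)"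
  shows "generate A (S \<union> P) = carrier A"
proof -
  interpret A: group A by fact
  interpret N: normal P A by fact
  have PA: "P \<subseteq> carrier A" using N.subset .
  have SP: "S \<union> P \<subseteq> carrier A" using assms(3) PA by (rule Un_least)
  have sg: "subgroup (generate A (S \<union> P)) A"
    by (rule A.generate_is_subgroup[OF SP])
  show ?thesis
  proof
    show "generate A (S \<union> P) \<subseteq> carrier A" by (rule subgroup.subset[OF sg])
    show "carrier A \<subseteq> generate A (S \<union> P)"
    proof
      fix a assume a: "a \<in> carrier A"
      then have "P #>\<^bsub>A\<^esub> a \<in> carrier (A Mod P)" unfolding carrier_FactGroup by (rule imageI)
      then have "P #>\<^bsub>A\<^esub> a \<in> (\<lambda>a. P #>\<^bsub>A\<^esub> a) ` generate A (S \<union> P)" unfolding assms(4) .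
      then obtain c where c: "c \<in> generate A (S \<union> P)" "P #>\<^bsub>A\<^esub> a = P #>\<^bsub>A\<^esub> c"
        by (rule imageE)
      have cA: "c \<in> carrier A" by (rule subgroup.mem_carrier[OF sg c(1)])
      have "a \<in> P #>\<^bsub>A\<^esub> a" by (rule A.rcos_self[OF a N.subgroup_axioms])
      then have "a \<in> P #>\<^bsub>A\<^esub> c" unfolding c(2) .
      then have "a \<otimes>\<^bsub>A\<^esub> inv\<^bsub>A\<^esub> c \<in> P" by (rule N.rcos_module_imp[OF A.group_axioms cA])
      then have h: "a \<otimes>\<^bsub>A\<^esub> inv\<^bsub>A\<^esub> c \<in> generate A (S \<union> P)" by (intro generate.incl UnI2)
      have "a = (a \<otimes>\<^bsub>A\<^esub> inv\<^bsub>A\<^esub> c) \<otimes>\<^bsub>A\<^esub> c" using a cA by (simp add: A.m_assoc)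
      also have "\<dots> \<in> generate A (S \<union> P)" by (rule generate.eng[OF h c(1)])
      finally show "a \<in> generate A (S \<union> P)" .
    qed
  qed
qed

lemma crit_a:
  assumes "group A" "P \<lhd> A" "fgen_mod A P n"
  shows "fgq (A Mod P) \<and> min_gens (A Mod P) \<le> n"
proof -
  interpret A: group A by fact
  interpret N: normal P A by fact
  obtain S where S: "finite S" "S \<subseteq> carrier A" "card S \<le> n" "generate A (S \<union> P) = carrier A"
    using assms(3) unfolding fgen_mod_def by (elim exE conjE) (rule that)
  let ?T = "(\<lambda>a. P #>\<^bsub>A\<^esub> a) ` S"
  have gT: "generate (A Mod P) ?T = carrier (A Mod P)"
    unfolding gen_img_quot[OF assms(1,2) S(2)] S(4) carrier_FactGroup ..
  have fT: "finite ?T" using S(1) by (rule finite_imageI)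
  have sT: "?T \<subseteq> carrier (A Mod P)" unfolding carrier_FactGroup using S(2) by (rule image_mono)
  have cT: "card ?T \<le> n" using card_image_le[OF S(1), of "\<lambda>a. P #>\<^bsub>A\<^esub> a"] S(3) by linarith
  have ex: "\<exists>T. finite T \<and> T \<subseteq> carrier (A Mod P) \<and> card T = card ?T \<and> generate (A Mod P) T = carrier (A Mod P)"
    by (rule exI[of _ ?T]) (intro conjI fT sT refl gT)
  have "min_gens (A Mod P) \<le> card ?T"
    unfolding min_gens_def by (rule Least_le) (rule ex)
  moreover have "fgq (A Mod P)" unfolding fgq_def by (rule exI[of _ ?T]) (intro conjI fT sT gT)
  ultimately show ?thesis using cT by linarith
qed

lemma crit_b:
  assumes "group A" "P \<lhd> A" "fgq (A Mod P)"
  shows "fgen_mod A P (min_gens (A Mod P))"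
proof -
  interpret A: group A by fact
  interpret N: normal P A by fact
  obtain T0 where T0: "finite T0" "T0 \<subseteq> carrier (A Mod P)" "generate (A Mod P) T0 = carrier (A Mod P)"
    using assms(3) unfolding fgq_def by (elim exE conjE) (rule that)
  have "\<exists>T. finite T \<and> T \<subseteq> carrier (A Mod P) \<and> card T = card T0 \<and> generate (A Mod P) T = carrier (A Mod P)"
    by (rule exI[of _ T0]) (intro conjI T0 refl)
  then have "\<exists>T. finite T \<and> T \<subseteq> carrier (A Mod P) \<and> card T = min_gens (A Mod P) \<and> generate (A Mod P) T = carrier (A Mod P)"
    unfolding min_gens_def by (rule LeastI)
  then obtain T where T: "finite T" "T \<subseteq> carrier (A Mod P)" "card T = min_gens (A Mod P)"
      "generate (A Mod P) T = carrier (A Mod P)" by (elim exE conjE) (rule that)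
  have "\<forall>Z\<in>T. \<exists>a. a \<in> carrier A \<and> Z = P #>\<^bsub>A\<^esub> a"
  proof
    fix Z assume Z: "Z \<in> T"
    have "Z \<in> (\<lambda>x. P #>\<^bsub>A\<^esub> x) ` carrier A" using T(2) Z unfolding carrier_FactGroup by (rule subsetD)
    then show "\<exists>a. a \<in> carrier A \<and> Z = P #>\<^bsub>A\<^esub> a" by (rule imageE) (intro exI conjI)
  qed
  from bchoice[OF this] obtain rep where r0: "\<forall>Z\<in>T. rep Z \<in> carrier A \<and> Z = P #>\<^bsub>A\<^esub> rep Z"
    by (elim exE)
  have r: "rep Z \<in> carrier A \<and> Z = P #>\<^bsub>A\<^esub> rep Z" if "Z \<in> T" for Z using r0 that by (rule bspec)
  let ?S = "rep ` T"
  have S1: "?S \<subseteq> carrier A" using r by (intro image_subsetI) simp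
  have S2: "(\<lambda>a. P #>\<^bsub>A\<^esub> a) ` ?S = T"
  proof -
    have "(\<lambda>a. P #>\<^bsub>A\<^esub> a) ` ?S = (\<lambda>Z. P #>\<^bsub>A\<^esub> rep Z) ` T" by (simp add: image_image)
    also have "\<dots> = (\<lambda>Z. Z) ` T" by (rule image_cong) (use r in auto)
    also have "\<dots> = T" by simp
    finally show ?thesis .
  qed
  have "(\<lambda>a. P #>\<^bsub>A\<^esub> a) ` generate A (?S \<union> P) = carrier (A Mod P)"
    using gen_img_quot[OF assms(1,2) S1] S2 T(4) by simp
  then have g: "generate A (?S \<union> P) = carrier A" by (rule gen_from_img[OF assms(1,2) S1])
  have c: "card ?S \<le> min_gens (A Mod P)" using card_image_le[OF T(1), of rep] T(3) by simp
  have f: "finite ?S" using T(1) by simp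
  show ?thesis unfolding fgen_mod_def
    by (rule exI[of _ ?S]) (intro conjI f S1 c g)
qed

lemma img_comm_pow:
  assumes "group A" "group B" "f \<in> hom A B" "f ` carrier A = carrier B"
  shows "f ` comm_pow_subgroup A p = comm_pow_subgroup B p"
proof -
  interpret A: group A by fact
  interpret B: group B by fact
  interpret h: group_hom A B f unfolding group_hom_def group_hom_axioms_def using assms by blast
  let ?XA = "derived_set A (carrier A) \<union> {a [^]\<^bsub>A\<^esub> p | a. a \<in> carrier A}"
  let ?XB = "derived_set B (carrier B) \<union> {a [^]\<^bsub>B\<^esub> p | a. a \<in> carrier B}"
  have subA: "?XA \<subseteq> carrier A" by auto
  have fc: "f a \<in> carrier B" if "a \<in> carrier A" for a using that by simp
  have D: "f ` derived_set A (carrier A) = derived_set B (carrier B)"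
  proof (intro equalityI subsetI)
    fix z assume "z \<in> f ` derived_set A (carrier A)"
    then obtain a b where ab: "a \<in> carrier A" "b \<in> carrier A"
      "z = f (a \<otimes>\<^bsub>A\<^esub> b \<otimes>\<^bsub>A\<^esub> inv\<^bsub>A\<^esub> a \<otimes>\<^bsub>A\<^esub> inv\<^bsub>A\<^esub> b)" by blast
    then have "z = f a \<otimes>\<^bsub>B\<^esub> f b \<otimes>\<^bsub>B\<^esub> inv\<^bsub>B\<^esub> f a \<otimes>\<^bsub>B\<^esub> inv\<^bsub>B\<^esub> f b" by simp
    then show "z \<in> derived_set B (carrier B)" using fc[OF ab(1)] fc[OF ab(2)] by blast
  next
    fix z assume "z \<in> derived_set B (carrier B)"
    then obtain a b where ab: "a \<in> carrier B" "b \<in> carrier B"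
      "z = a \<otimes>\<^bsub>B\<^esub> b \<otimes>\<^bsub>B\<^esub> inv\<^bsub>B\<^esub> a \<otimes>\<^bsub>B\<^esub> inv\<^bsub>B\<^esub> b" by blast
    obtain a' where a': "a' \<in> carrier A" "a = f a'" using ab(1) assms(4) by (metis imageE)
    obtain b' where b': "b' \<in> carrier A" "b = f b'" using ab(2) assms(4) by (metis imageE)
    have "z = f (a' \<otimes>\<^bsub>A\<^esub> b' \<otimes>\<^bsub>A\<^esub> inv\<^bsub>A\<^esub> a' \<otimes>\<^bsub>A\<^esub> inv\<^bsub>A\<^esub> b')"
      using ab(3) a' b' by simp
    moreover have "a' \<otimes>\<^bsub>A\<^esub> b' \<otimes>\<^bsub>A\<^esub> inv\<^bsub>A\<^esub> a' \<otimes>\<^bsub>A\<^esub> inv\<^bsub>A\<^esub> b' \<in> derived_set A (carrier A)"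
      using a'(1) b'(1) by blast
    ultimately show "z \<in> f ` derived_set A (carrier A)" by (rule image_eqI)
  qed
  have Pw: "f ` {a [^]\<^bsub>A\<^esub> p | a. a \<in> carrier A} = {a [^]\<^bsub>B\<^esub> p | a. a \<in> carrier B}"
  proof (intro equalityI subsetI)
    fix z assume "z \<in> f ` {a [^]\<^bsub>A\<^esub> p | a. a \<in> carrier A}"
    then obtain a where a: "a \<in> carrier A" "z = f (a [^]\<^bsub>A\<^esub> p)" by blast
    then have "z = f a [^]\<^bsub>B\<^esub> p" by (simp add: h.hom_nat_pow)
    then show "z \<in> {a [^]\<^bsub>B\<^esub> p | a. a \<in> carrier B}" using fc[OF a(1)] by blast
  next
    fix z assume "z \<in> {a [^]\<^bsub>B\<^esub> p | a. a \<in> carrier B}"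
    then obtain b where b: "b \<in> carrier B" "z = b [^]\<^bsub>B\<^esub> p" by blast
    obtain a where a: "a \<in> carrier A" "b = f a" using b(1) assms(4) by (metis imageE)
    have "z = f (a [^]\<^bsub>A\<^esub> p)" using a b by (simp add: h.hom_nat_pow)
    moreover have "a [^]\<^bsub>A\<^esub> p \<in> {a [^]\<^bsub>A\<^esub> p | a. a \<in> carrier A}" using a(1) by blast
    ultimately show "z \<in> f ` {a [^]\<^bsub>A\<^esub> p | a. a \<in> carrier A}" by (rule image_eqI)
  qed
  have "f ` ?XA = ?XB" unfolding image_Un D Pw ..
  then show ?thesis unfolding comm_pow_subgroup_def using h.generate_img[OF subA] by simp
qed

lemma key_dp:
  assumes "group A" "group B" "f \<in> hom A B" "f ` carrier A = carrier B"
    and "finite T" "T \<subseteq> carrier A"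
    and "kernel A B f \<subseteq> generate A (T \<union> comm_pow_subgroup A p)"
  shows "d_p A p \<le> d_p B p + card T"
proof -
  interpret A: group A by fact
  interpret B: group B by fact
  interpret h: group_hom A B f unfolding group_hom_def group_hom_axioms_def using assms by blast
  define PA where "PA = comm_pow_subgroup A p"
  define PB where "PB = comm_pow_subgroup B p"
  have nA: "PA \<lhd> A" unfolding PA_def by (rule comm_pow_normal[OF assms(1)])
  have nB: "PB \<lhd> B" unfolding PB_def by (rule comm_pow_normal[OF assms(2)])
  have PAc: "PA \<subseteq> carrier A" using nA normal_imp_subgroup subgroup.subset by blast
  have fP: "f ` PA = PB" unfolding PA_def PB_def by (rule img_comm_pow[OF assms(1-4)])
  have dA: "d_p A p = min_gens (A Mod PA)" unfolding d_p_def PA_def ..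
  have dB: "d_p B p = min_gens (B Mod PB)" unfolding d_p_def PB_def ..
  show ?thesis
  proof (cases "fgq (B Mod PB)")
    case True
    obtain SB where SB: "finite SB" "SB \<subseteq> carrier B" "card SB \<le> min_gens (B Mod PB)"
      "generate B (SB \<union> PB) = carrier B"
      using crit_b[OF assms(2) nB True] unfolding fgen_mod_def by (elim exE conjE) (rule that)
    have "\<forall>b\<in>SB. \<exists>a. a \<in> carrier A \<and> f a = b"
    proof
      fix b assume b: "b \<in> SB"
      have "b \<in> f ` carrier A" using SB(2) b unfolding assms(4) by (rule subsetD)
      then show "\<exists>a. a \<in> carrier A \<and> f a = b" by (rule imageE) (intro exI conjI, assumption, rule sym)
    qed
    from bchoice[OF this] obtain rep where r0: "\<forall>b\<in>SB. rep b \<in> carrier A \<and> f (rep b) = b"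
      by (elim exE)
    have r: "rep b \<in> carrier A \<and> f (rep b) = b" if "b \<in> SB" for b using r0 that by (rule bspec)
    let ?SA = "rep ` SB"
    have SA1: "?SA \<subseteq> carrier A" using r by (intro image_subsetI) simp
    have SA2: "f ` ?SA = SB"
    proof -
      have "f ` ?SA = (\<lambda>b. f (rep b)) ` SB" by (simp add: image_image)
      also have "\<dots> = (\<lambda>b. b) ` SB" by (rule image_cong) (use r in auto)
      also have "\<dots> = SB" by simp
      finally show ?thesis .
    qed
    let ?S = "?SA \<union> T"
    have S1: "?S \<subseteq> carrier A" using SA1 assms(6) by (rule Un_least)
    have SP: "?S \<union> PA \<subseteq> carrier A" using S1 PAc by (rule Un_least)
    have SAP: "?SA \<union> PA \<subseteq> carrier A" using SA1 PAc by (rule Un_least)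
    have sg: "subgroup (generate A (?S \<union> PA)) A" by (rule A.generate_is_subgroup[OF SP])
    have gS: "generate A (?S \<union> PA) = carrier A"
    proof
      show "generate A (?S \<union> PA) \<subseteq> carrier A" by (rule subgroup.subset[OF sg])
      show "carrier A \<subseteq> generate A (?S \<union> PA)"
      proof
        fix a assume a: "a \<in> carrier A"
        have "f a \<in> carrier B" using a by simp
        also have "carrier B = generate B (f ` (?SA \<union> PA))"
          unfolding image_Un SA2 fP SB(4) ..
        also have "\<dots> = f ` generate A (?SA \<union> PA)" by (rule h.generate_img[OF SAP])
        finally obtain c where c: "c \<in> generate A (?SA \<union> PA)" "f a = f c" by (rule imageE)
        have c2: "c \<in> generate A (?S \<union> PA)"
          using c(1) A.mono_generate[of "?SA \<union> PA" "?S \<union> PA"] by blast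
        have cA: "c \<in> carrier A" by (rule subgroup.mem_carrier[OF sg c2])
        have "f (a \<otimes>\<^bsub>A\<^esub> inv\<^bsub>A\<^esub> c) = \<one>\<^bsub>B\<^esub>" using a cA c(2) by simp
        then have "a \<otimes>\<^bsub>A\<^esub> inv\<^bsub>A\<^esub> c \<in> kernel A B f" unfolding kernel_def using a cA by simp
        then have "a \<otimes>\<^bsub>A\<^esub> inv\<^bsub>A\<^esub> c \<in> generate A (T \<union> PA)" using assms(7) unfolding PA_def by (rule subsetD[rotated])
        then have h: "a \<otimes>\<^bsub>A\<^esub> inv\<^bsub>A\<^esub> c \<in> generate A (?S \<union> PA)"
          using A.mono_generate[of "T \<union> PA" "?S \<union> PA"] by blast
        have "a = (a \<otimes>\<^bsub>A\<^esub> inv\<^bsub>A\<^esub> c) \<otimes>\<^bsub>A\<^esub> c" using a cA by (simp add: A.m_assoc)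
        also have "\<dots> \<in> generate A (?S \<union> PA)" by (rule generate.eng[OF h c2])
        finally show "a \<in> generate A (?S \<union> PA)" .
      qed
    qed
    have fS: "finite ?S" using SB(1) assms(5) by simp
    have cS: "card ?S \<le> min_gens (B Mod PB) + card T"
    proof -
      have "card ?S \<le> card ?SA + card T" by (rule card_Un_le)
      also have "card ?SA \<le> card SB" by (rule card_image_le[OF SB(1)])
      finally show ?thesis using SB(3) by linarith
    qed
    have "fgen_mod A PA (min_gens (B Mod PB) + card T)"
      unfolding fgen_mod_def by (rule exI[of _ ?S]) (intro conjI fS S1 cS gS)
    then have "min_gens (A Mod PA) \<le> min_gens (B Mod PB) + card T" using crit_a[OF assms(1) nA] by blast
    then show ?thesis unfolding dA dB .
  next
    case False
    have nfA: "\<not> fgq (A Mod PA)"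
    proof
      assume "fgq (A Mod PA)"
      then obtain SA where SA: "finite SA" "SA \<subseteq> carrier A" "generate A (SA \<union> PA) = carrier A"
        using crit_b[OF assms(1) nA \<open>fgq (A Mod PA)\<close>] unfolding fgen_mod_def
        by (elim exE conjE) (rule that, assumption+)
      have SAP: "SA \<union> PA \<subseteq> carrier A" using SA(2) PAc by (rule Un_least)
      have "generate B (f ` SA \<union> PB) = generate B (f ` (SA \<union> PA))" unfolding image_Un fP ..
      also have "\<dots> = f ` generate A (SA \<union> PA)" by (rule h.generate_img[OF SAP])
      also have "\<dots> = carrier B" unfolding SA(3) assms(4) ..
      finally have g: "generate B (f ` SA \<union> PB) = carrier B" .
      have "fgen_mod B PB (card (f ` SA))" unfolding fgen_mod_def
        by (rule exI[of _ "f ` SA"]) (intro conjI finite_imageI SA(1) le_refl g, use SA(2) in auto)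
      then have "fgq (B Mod PB)" using crit_a[OF assms(2) nB] by blast
      then show False using False by contradiction
    qed
    have e: "(\<lambda>n. \<exists>S. finite S \<and> S \<subseteq> carrier Q \<and> card S = n \<and> generate Q S = carrier Q) = (\<lambda>n. False)"
      if "\<not> fgq Q" for Q :: "('x, 'y) monoid_scheme"
      using that unfolding fgq_def by blast
    have "min_gens (A Mod PA) = min_gens (B Mod PB)"
      unfolding min_gens_def e[OF nfA] e[OF False] ..
    then show ?thesis unfolding dA dB by simp
  qed
qed

lemma (in group) sub_pow:
  assumes "subgroup H G" "a \<in> H"
  shows "a [^] (n::nat) \<in> H"
  using subgroup_int_pow_closed[OF assms, of "int n"] by (simp add: int_pow_int)

lemma (in group) conj_in_gen:
  assumes "subgroup H G" "w \<in> H" "t \<in> H"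
  shows "w \<otimes> t \<otimes> inv w \<in> generate G ({t} \<union> derived_set G H)"
proof -
  have w: "w \<in> carrier G" using assms(1,2) by (rule subgroup.mem_carrier)
  have t: "t \<in> carrier G" using assms(1,3) by (rule subgroup.mem_carrier)
  have d: "w \<otimes> t \<otimes> inv w \<otimes> inv t \<in> derived_set G H"
    by (rule UN_I[OF assms(2)], rule UN_I[OF assms(3)], rule singletonI)
  have "w \<otimes> t \<otimes> inv w = (w \<otimes> t \<otimes> inv w \<otimes> inv t) \<otimes> t" using w t by (simp add: m_assoc)
  also have "\<dots> \<in> generate G ({t} \<union> derived_set G H)"
    by (rule generate.eng[OF generate.incl[OF UnI2[OF d]] generate.incl[OF UnI1[OF singletonI]]])
  finally show ?thesis .
qed

lemma (in group) conj_alg: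
  assumes "u \<in> carrier G" "u' \<in> carrier G" "d \<in> carrier G" "y \<in> carrier G" "d \<otimes> y = y \<otimes> d"
  shows "inv u \<otimes> y \<otimes> u = (inv u \<otimes> (d \<otimes> u')) \<otimes> (inv u' \<otimes> y \<otimes> u') \<otimes> inv (inv u \<otimes> (d \<otimes> u'))"
proof -
  have "inv (inv u \<otimes> (d \<otimes> u')) = (inv u' \<otimes> inv d) \<otimes> u" using assms(1-4) by (simp add: inv_mult_group)
  also have "\<dots> = inv u' \<otimes> (inv d \<otimes> u)" using assms(1-4) by (simp add: m_assoc)
  finally have i: "inv (inv u \<otimes> (d \<otimes> u')) = inv u' \<otimes> (inv d \<otimes> u)" .
  have e: "d \<otimes> (y \<otimes> (inv d \<otimes> u)) = y \<otimes> u"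
  proof -
    have "d \<otimes> (y \<otimes> (inv d \<otimes> u)) = (d \<otimes> y) \<otimes> (inv d \<otimes> u)" using assms(1-4) by (simp add: m_assoc)
    also have "\<dots> = (y \<otimes> d) \<otimes> (inv d \<otimes> u)" by (simp only: assms(5))
    also have "\<dots> = y \<otimes> u" using assms(1-4) by (simp add: m_assoc cancel_l2)
    finally show ?thesis .
  qed
  show ?thesis unfolding i using assms(1-4) e by (simp add: m_assoc cancel_l1 cancel_l2)
qed

lemma (in group) nc_normal:
  assumes "S \<subseteq> carrier G"
  shows "normal_closure G S \<lhd> G"
proof -
  let ?X = "{g \<otimes> y \<otimes> inv g | g y. g \<in> carrier G \<and> y \<in> S}"
  have sub: "?X \<subseteq> carrier G" using assms(1) by auto
  show ?thesis unfolding normal_closure_def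
  proof (rule normal_generateI[OF sub])
    fix h g assume h: "h \<in> ?X" and g: "g \<in> carrier G"
    then obtain a y where ay: "a \<in> carrier G" "y \<in> S" "h = a \<otimes> y \<otimes> inv a" by blast
    have yG: "y \<in> carrier G" using ay(2) assms(1) by blast
    have "g \<otimes> h \<otimes> inv g = (g \<otimes> a) \<otimes> y \<otimes> inv (g \<otimes> a)"
      using ay(1) yG g unfolding ay(3) inv_mult_group[OF g ay(1)] by (simp add: m_assoc)
    then show "g \<otimes> h \<otimes> inv g \<in> ?X" using ay(1,2) g by blast
  qed
qed

lemma (in group) main_T:
  assumes nH: "H \<lhd> G" and fin: "finite (rcosets H)" and x: "x \<in> carrier G"
    and p: "Factorial_Ring.prime (p::nat)" and yH: "x [^] (p ^ k) \<in> H"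
  shows "\<exists>T. finite T \<and> T \<subseteq> H \<and> card T * p ^ k \<le> card (rcosets H) \<and>
    (\<forall>g\<in>carrier G. g \<otimes> x [^] (p ^ k) \<otimes> inv g \<in>
       generate G (T \<union> generate G (derived_set G H \<union> {a [^] p | a. a \<in> H})))"
proof -
  interpret N: normal H G by (rule nH)
  define Phi where "Phi = generate G (derived_set G H \<union> {a [^] p | a. a \<in> H})"
  define y where "y = x [^] (p ^ k)"
  have yG: "y \<in> carrier G" unfolding y_def using x by simp
  have yH': "y \<in> H" unfolding y_def by (rule yH)
  have HG: "H \<subseteq> carrier G" by (rule N.subset)
  have PhiG: "Phi \<subseteq> carrier G"
  proof -
    have "derived_set G H \<union> {a [^] p | a. a \<in> H} \<subseteq> carrier G"
    proof (rule Un_least)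
      show "derived_set G H \<subseteq> carrier G" by (rule derived_set_in_carrier[OF HG])
      show "{a [^] p | a. a \<in> H} \<subseteq> carrier G" using HG by auto
    qed
    then show ?thesis unfolding Phi_def by (rule generate_incl)
  qed
  have dPhi: "derived_set G H \<subseteq> Phi" unfolding Phi_def
    by (rule subsetI, rule generate.incl, rule UnI1)
  have pPhi: "a [^] p \<in> Phi" if "a \<in> H" for a unfolding Phi_def
    by (rule generate.incl, rule UnI2) (use that in blast)
  show ?thesis
  proof (cases "\<exists>s<k. x [^] (p ^ s) \<in> H")
    case True
    then obtain s where s: "s < k" "x [^] (p ^ s) \<in> H" by blast
    define m where "m = p ^ (k - Suc s)"
    have pk: "p ^ k = p ^ s * (m * p)"
    proof -
      have "k = s + (k - Suc s) + 1" using s(1) by simp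
      then have "p ^ k = p ^ (s + (k - Suc s) + 1)" by simp
      also have "\<dots> = p ^ s * (m * p)" unfolding m_def power_add by simp
      finally show ?thesis .
    qed
    have xs: "x [^] (p ^ s) \<in> carrier G" using x by simp
    have "\<forall>g\<in>carrier G. g \<otimes> y \<otimes> inv g \<in> generate G ({} \<union> Phi)"
    proof
      fix g assume g: "g \<in> carrier G"
      define z where "z = g \<otimes> x [^] (p ^ s) \<otimes> inv g"
      have zH: "z \<in> H" unfolding z_def by (rule N.inv_op_closed2[OF g s(2)])
      have "y = (x [^] (p ^ s)) [^] (m * p)" unfolding y_def pk using x by (simp add: nat_pow_pow)
      then have "g \<otimes> y \<otimes> inv g = z [^] (m * p)" unfolding z_def using conj_pow[OF xs g] by simp
      also have "\<dots> = (z [^] m) [^] p" using zH HG by (simp add: nat_pow_pow subsetD)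
      also have "\<dots> \<in> Phi" by (rule pPhi[OF sub_pow[OF N.subgroup_axioms zH]])
      finally show "g \<otimes> y \<otimes> inv g \<in> generate G ({} \<union> Phi)" by (intro generate.incl UnI2)
    qed
    then show ?thesis unfolding y_def Phi_def by (intro exI[of _ "{}"]) simp
  next
    case False
    define P where "P = G Mod H"
    interpret P: group P unfolding P_def by (rule N.factorgroup_is_group)
    have carP: "carrier P = rcosets H" unfolding P_def FactGroup_def by simp
    have oneP: "\<one>\<^bsub>P\<^esub> = H" unfolding P_def by simp
    have multP: "A \<otimes>\<^bsub>P\<^esub> B = A <#> B" for A B unfolding P_def by simp
    define xi where "xi = H #> x"
    have xiP: "xi \<in> carrier P" unfolding carP xi_def by (rule rcosetsI[OF HG x])
    have pw: "xi [^]\<^bsub>P\<^esub> (n::nat) = H #> x [^] n" for n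
      unfolding xi_def P_def by (rule N.FactGroup_pow[OF x])
    have ipw: "xi [^]\<^bsub>P\<^esub> (i::int) = H #> x [^] i" for i
      unfolding xi_def P_def by (rule N.FactGroup_int_pow[OF x])
    have one_iff: "xi [^]\<^bsub>P\<^esub> (n::nat) = \<one>\<^bsub>P\<^esub> \<longleftrightarrow> x [^] n \<in> H" for n
    proof
      assume "xi [^]\<^bsub>P\<^esub> n = \<one>\<^bsub>P\<^esub>"
      then have e: "H #> x [^] n = H" unfolding pw oneP .
      have "x [^] n \<in> H #> x [^] n" by (rule rcos_self[OF _ N.subgroup_axioms]) (use x in simp)
      then show "x [^] n \<in> H" unfolding e .
    next
      assume "x [^] n \<in> H"
      then show "xi [^]\<^bsub>P\<^esub> n = \<one>\<^bsub>P\<^esub>" unfolding pw oneP by (rule N.rcos_const[OF is_group])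
    qed
    have "P.ord xi dvd p ^ k" using P.pow_eq_id[OF xiP] one_iff yH by blast
    then obtain i where i: "i \<le> k" "P.ord xi = p ^ i" using divides_primepow_nat[OF p] by blast
    have ordk: "P.ord xi = p ^ k"
    proof (rule ccontr)
      assume "P.ord xi \<noteq> p ^ k"
      then have "i < k" using i by (metis le_neq_implies_less)
      moreover have "x [^] (p ^ i) \<in> H" using P.pow_eq_id[OF xiP, of "p ^ i"] one_iff i(2) by simp
      ultimately show False using False by blast
    qed
    define C where "C = generate P {xi}"
    have sgC: "subgroup C P" unfolding C_def by (rule P.generate_is_subgroup) (use xiP in simp)
    have cardC: "card C = p ^ k" unfolding C_def using P.generate_pow_card[OF xiP] ordk by simp
    have lag: "card (rcosets\<^bsub>P\<^esub> C) * p ^ k = card (rcosets H)"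
      using P.lagrange[OF sgC] cardC unfolding order_def carP by simp
    have pk0: "p ^ k > 0" using p prime_gt_0_nat by simp
    have finR: "finite (rcosets\<^bsub>P\<^esub> C)"
    proof (rule ccontr)
      assume "infinite (rcosets\<^bsub>P\<^esub> C)"
      then have "card (rcosets H) = 0" using lag by simp
      moreover have "H \<in> rcosets H" by (rule N.subgroup_in_rcosets[OF is_group])
      ultimately show False using fin by simp
    qed
    have "\<forall>R\<in>rcosets\<^bsub>P\<^esub> C. \<exists>u. u \<in> carrier G \<and> R = C #>\<^bsub>P\<^esub> (H #> u)"
    proof
      fix R assume "R \<in> rcosets\<^bsub>P\<^esub> C"
      then obtain Z where Z: "Z \<in> carrier P" "R = C #>\<^bsub>P\<^esub> Z" unfolding RCOSETS_def by blast
      then obtain u where "u \<in> carrier G" "Z = H #> u" unfolding carP RCOSETS_def by blast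
      then show "\<exists>u. u \<in> carrier G \<and> R = C #>\<^bsub>P\<^esub> (H #> u)" using Z(2) by blast
    qed
    from bchoice[OF this] obtain rep where
      rep0: "\<forall>R\<in>rcosets\<^bsub>P\<^esub> C. rep R \<in> carrier G \<and> R = C #>\<^bsub>P\<^esub> (H #> rep R)" by (elim exE)
    have rep: "rep R \<in> carrier G" "R = C #>\<^bsub>P\<^esub> (H #> rep R)" if "R \<in> rcosets\<^bsub>P\<^esub> C" for R
      using rep0 that by auto
    define T where "T = (\<lambda>R. inv (rep R) \<otimes> y \<otimes> rep R) ` (rcosets\<^bsub>P\<^esub> C)"
    have finT: "finite T" unfolding T_def using finR by simp
    have TH: "T \<subseteq> H" unfolding T_def using rep(1) N.inv_op_closed1 yH' by blast
    have cardT: "card T * p ^ k \<le> card (rcosets H)"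
    proof -
      have "card T \<le> card (rcosets\<^bsub>P\<^esub> C)" unfolding T_def by (rule card_image_le[OF finR])
      then have "card T * p ^ k \<le> card (rcosets\<^bsub>P\<^esub> C) * p ^ k" by simp
      then show ?thesis using lag by simp
    qed
    have TPG: "T \<union> Phi \<subseteq> carrier G" using TH HG PhiG by blast
    have main: "g \<otimes> y \<otimes> inv g \<in> generate G (T \<union> Phi)" if g: "g \<in> carrier G" for g
    proof -
      define u where "u = inv g"
      have u: "u \<in> carrier G" unfolding u_def using g by simp
      have cu: "g \<otimes> y \<otimes> inv g = inv u \<otimes> y \<otimes> u" unfolding u_def using g by simp
      define Z where "Z = H #> u"
      have ZP: "Z \<in> carrier P" unfolding Z_def carP by (rule rcosetsI[OF HG u])
      have CP: "C \<subseteq> carrier P" by (rule subgroup.subset[OF sgC])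
      define R where "R = C #>\<^bsub>P\<^esub> Z"
      have RR: "R \<in> rcosets\<^bsub>P\<^esub> C" unfolding R_def by (rule P.rcosetsI[OF CP ZP])
      define u' where "u' = rep R"
      have u': "u' \<in> carrier G" unfolding u'_def by (rule rep(1)[OF RR])
      have "Z \<in> C #>\<^bsub>P\<^esub> Z" by (rule P.rcos_self[OF ZP sgC])
      also have "C #>\<^bsub>P\<^esub> Z = C #>\<^bsub>P\<^esub> (H #> u')" using rep(2)[OF RR] unfolding R_def u'_def .
      finally obtain e where e: "e \<in> C" "Z = e \<otimes>\<^bsub>P\<^esub> (H #> u')" unfolding r_coset_def by blast
      have "e \<in> generate P {xi}" using e(1) unfolding C_def .
      then obtain j :: int where j: "e = xi [^]\<^bsub>P\<^esub> j" unfolding P.generate_pow[OF xiP] by blast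
      define d where "d = x [^] j"
      have d: "d \<in> carrier G" unfolding d_def using x by simp
      have "Z = (H #> d) <#> (H #> u')" using e(2) unfolding j ipw multP d_def .
      also have "\<dots> = H #> (d \<otimes> u')" by (rule N.rcos_sum[OF d u'])
      finally have Zv: "H #> u = H #> (d \<otimes> u')" unfolding Z_def .
      have v: "d \<otimes> u' \<in> carrier G" using d u' by simp
      have "u \<in> H #> u" by (rule rcos_self[OF u N.subgroup_axioms])
      then have "u \<in> H #> (d \<otimes> u')" unfolding Zv .
      then have h1: "u \<otimes> inv (d \<otimes> u') \<in> H" by (rule N.rcos_module_imp[OF is_group v])
      have "inv (u \<otimes> inv (d \<otimes> u')) \<in> H" by (rule subgroup.m_inv_closed[OF N.subgroup_axioms h1])
      also have "inv (u \<otimes> inv (d \<otimes> u')) = (d \<otimes> u') \<otimes> inv u" using u v by (simp add: inv_mult_group)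
      finally have h2: "(d \<otimes> u') \<otimes> inv u \<in> H" .
      have "inv u \<otimes> ((d \<otimes> u') \<otimes> inv u) \<otimes> u \<in> H" by (rule N.inv_op_closed1[OF u h2])
      also have "inv u \<otimes> ((d \<otimes> u') \<otimes> inv u) \<otimes> u = inv u \<otimes> (d \<otimes> u')" using u v by (simp add: m_assoc)
      finally have wH: "inv u \<otimes> (d \<otimes> u') \<in> H" .
      define t where "t = inv u' \<otimes> y \<otimes> u'"
      have tT: "t \<in> T" unfolding t_def T_def u'_def using RR by blast
      have tH: "t \<in> H" using tT TH by blast
      have comm: "d \<otimes> y = y \<otimes> d"
      proof -
        have yi: "y = x [^] (int (p ^ k))" unfolding y_def by (rule int_pow_int[symmetric])
        have "d \<otimes> y = x [^] (j + int (p ^ k))" unfolding d_def yi by (rule int_pow_mult[OF x, symmetric])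
        also have "\<dots> = x [^] (int (p ^ k) + j)" by (simp only: add.commute)
        also have "\<dots> = y \<otimes> d" unfolding d_def yi by (rule int_pow_mult[OF x])
        finally show ?thesis .
      qed
      have "g \<otimes> y \<otimes> inv g = (inv u \<otimes> (d \<otimes> u')) \<otimes> t \<otimes> inv (inv u \<otimes> (d \<otimes> u'))"
        unfolding cu t_def by (rule conj_alg[OF u u' d yG comm])
      also have "\<dots> \<in> generate G ({t} \<union> derived_set G H)"
        by (rule conj_in_gen[OF N.subgroup_axioms wH tH])
      also have "generate G ({t} \<union> derived_set G H) \<subseteq> generate G (T \<union> Phi)"
        by (rule mono_generate) (use tT dPhi in blast)
      finally show ?thesis .
    qed
    show ?thesis unfolding y_def[symmetric] Phi_def[symmetric]
      by (rule exI[of _ T]) (intro conjI finT TH cardT ballI main)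
  qed
qed



lemma (in group) per_K:
  assumes p: "Factorial_Ring.prime (p::nat)" and x: "x \<in> carrier G"
    and Ndef: "N = normal_closure G {x [^] (p ^ k)}"
    and nK: "K \<lhd> G Mod N" and ppK: "p_power_index (G Mod N) p K"
  shows "\<exists>H. H \<lhd> G \<and> p_power_index G p H \<and>
    (real (d_p (G\<lparr>carrier := H\<rparr>) p) - 1) / real (card (rcosets H)) - 1 / real p ^ k
      \<le> (real (d_p ((G Mod N)\<lparr>carrier := K\<rparr>) p) - 1) / real (card (rcosets\<^bsub>G Mod N\<^esub> K))"
proof -
  define y where "y = x [^] (p ^ k)"
  have yG: "y \<in> carrier G" unfolding y_def using x by simp
  have nN: "N \<lhd> G" unfolding Ndef by (rule nc_normal) (use x in simp)
  interpret NN: normal N G by (rule nN)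
  define Q where "Q = G Mod N"
  interpret Q: group Q unfolding Q_def by (rule NN.factorgroup_is_group)
  interpret KK: normal K Q using nK unfolding Q_def .
  have carQ: "carrier Q = (\<lambda>g. N #> g) ` carrier G" unfolding Q_def by (rule carrier_FactGroup)
  have oneQ: "\<one>\<^bsub>Q\<^esub> = N" unfolding Q_def by simp
  have multQ: "A \<otimes>\<^bsub>Q\<^esub> B = A <#> B" for A B unfolding Q_def by simp
  define QK where "QK = Q Mod K"
  interpret QK: group QK unfolding QK_def by (rule KK.factorgroup_is_group)
  have f1: "(\<lambda>g. N #> g) \<in> hom G Q" unfolding Q_def by (rule NN.r_coset_hom_Mod)
  have f2: "(\<lambda>Z. K #>\<^bsub>Q\<^esub> Z) \<in> hom Q QK" unfolding QK_def by (rule KK.r_coset_hom_Mod)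
  define phi where "phi = (\<lambda>Z. K #>\<^bsub>Q\<^esub> Z) \<circ> (\<lambda>g. N #> g)"
  have phi: "phi \<in> hom G QK" unfolding phi_def by (rule Group.hom_compose[OF f1 f2])
  interpret ph: group_hom G QK phi unfolding group_hom_def group_hom_axioms_def
    using phi is_group QK.group_axioms by blast
  have surj: "phi ` carrier G = carrier QK"
    unfolding phi_def QK_def carrier_FactGroup carQ image_comp ..
  define H where "H = kernel G QK phi"
  have nH: "H \<lhd> G" unfolding H_def by (rule ph.normal_kernel)
  interpret HH: normal H G by (rule nH)
  have iso: "(\<lambda>Z. the_elem (phi ` Z)) \<in> iso (G Mod H) QK" unfolding H_def by (rule ph.FactGroup_iso_set[OF surj])
  have cardeq: "card (rcosets H) = card (rcosets\<^bsub>Q\<^esub> K)"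
    using iso_same_order[OF iso] unfolding order_def QK_def FactGroup_def by simp
  have Kmem: "K #>\<^bsub>Q\<^esub> Z = K \<longleftrightarrow> Z \<in> K" if "Z \<in> carrier Q" for Z
  proof
    assume e: "K #>\<^bsub>Q\<^esub> Z = K"
    have "Z \<in> K #>\<^bsub>Q\<^esub> Z" by (rule Q.rcos_self[OF that KK.subgroup_axioms])
    then show "Z \<in> K" unfolding e .
  next
    assume "Z \<in> K"
    then show "K #>\<^bsub>Q\<^esub> Z = K" by (rule KK.rcos_const[OF Q.group_axioms])
  qed
  have Hmem: "g \<in> H \<longleftrightarrow> g \<in> carrier G \<and> N #> g \<in> K" for g
  proof -
    have "g \<in> H \<longleftrightarrow> g \<in> carrier G \<and> K #>\<^bsub>Q\<^esub> (N #> g) = K"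
      unfolding H_def kernel_def phi_def QK_def by simp
    also have "\<dots> \<longleftrightarrow> g \<in> carrier G \<and> N #> g \<in> K" using Kmem carQ by blast
    finally show ?thesis .
  qed
  have NH: "N \<subseteq> H"
  proof
    fix n assume n: "n \<in> N"
    have "N #> n = N" by (rule NN.rcos_const[OF is_group n])
    then have "N #> n \<in> K" using KK.one_closed oneQ by simp
    then show "n \<in> H" unfolding Hmem using n NN.subset by blast
  qed
  have yN: "y \<in> N" unfolding Ndef normal_closure_def
  proof (rule generate.incl)
    have "y = \<one> \<otimes> y \<otimes> inv \<one>" using yG by simp
    then show "y \<in> {g \<otimes> ya \<otimes> inv g | g ya. g \<in> carrier G \<and> ya \<in> {x [^] (p ^ k)}}"
      unfolding y_def by blast
  qed
  have yH: "y \<in> H" using yN NH by blast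
  obtain n where n: "card (rcosets\<^bsub>Q\<^esub> K) = p ^ n" using ppK unfolding p_power_index_def Q_def by blast
  have pos: "card (rcosets H) > 0" using cardeq n p prime_gt_0_nat by simp
  have finH: "finite (rcosets H)" using pos card_ge_0_finite by blast
  have ppH: "p_power_index G p H" unfolding p_power_index_def using finH cardeq n by auto
  obtain T where T: "finite T" "T \<subseteq> H" "card T * p ^ k \<le> card (rcosets H)"
    "\<forall>g\<in>carrier G. g \<otimes> y \<otimes> inv g \<in> generate G (T \<union> generate G (derived_set G H \<union> {a [^] p | a. a \<in> H}))"
    using main_T[OF nH finH x p yH[unfolded y_def]] unfolding y_def[symmetric] by blast
  define Phi where "Phi = generate G (derived_set G H \<union> {a [^] p | a. a \<in> H})"
  define A where "A = G\<lparr>carrier := H\<rparr>"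
  define B where "B = Q\<lparr>carrier := K\<rparr>"
  have gA: "group A" unfolding A_def by (rule subgroup_imp_group[OF HH.subgroup_axioms])
  have gB: "group B" unfolding B_def by (rule Q.subgroup_imp_group[OF KK.subgroup_axioms])
  define f where "f = (\<lambda>g. N #> g)"
  have fhom: "f \<in> hom A B"
  proof (rule homI)
    fix a assume "a \<in> carrier A"
    then show "f a \<in> carrier B" unfolding A_def B_def f_def using Hmem by simp
  next
    fix a b assume a: "a \<in> carrier A" and b: "b \<in> carrier A"
    then have aG: "a \<in> carrier G" and bG: "b \<in> carrier G" unfolding A_def using HH.subset by auto
    show "f (a \<otimes>\<^bsub>A\<^esub> b) = f a \<otimes>\<^bsub>B\<^esub> f b"
      unfolding A_def B_def f_def using NN.rcos_sum[OF aG bG] multQ by simp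
  qed
  have fsurj: "f ` carrier A = carrier B"
  proof
    show "f ` carrier A \<subseteq> carrier B" unfolding A_def B_def f_def using Hmem by auto
    show "carrier B \<subseteq> f ` carrier A"
    proof
      fix Z assume "Z \<in> carrier B"
      then have Z: "Z \<in> K" unfolding B_def by simp
      then have "Z \<in> carrier Q" using KK.subset by blast
      then obtain g where g: "g \<in> carrier G" "Z = N #> g" unfolding carQ by blast
      then have "g \<in> H" unfolding Hmem using Z by simp
      then show "Z \<in> f ` carrier A" unfolding A_def f_def using g(2) by simp
    qed
  qed
  have HA: "carrier A = H" unfolding A_def by simp
  have PhiH: "Phi \<subseteq> H" unfolding Phi_def
  proof (rule generate_subgroup_incl[OF _ HH.subgroup_axioms])
    show "derived_set G H \<union> {a [^] p | a. a \<in> H} \<subseteq> H"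
    proof (rule Un_least)
      show "derived_set G H \<subseteq> H" by (rule derived_set_incl[OF subset_refl HH.subgroup_axioms])
      show "{a [^] p | a. a \<in> H} \<subseteq> H" using sub_pow[OF HH.subgroup_axioms] by blast
    qed
  qed
  have cpA: "comm_pow_subgroup A p = Phi"
  proof -
    have s1: "derived_set A (carrier A) = derived_set G H"
      unfolding A_def using derived_set_consistent[OF subset_refl HH.subgroup_axioms] by simp
    have s2: "{a [^]\<^bsub>A\<^esub> p | a. a \<in> carrier A} = {a [^] p | a. a \<in> H}"
      unfolding HA A_def using nat_pow_consistent by simp
    have sub: "derived_set G H \<union> {a [^] p | a. a \<in> H} \<subseteq> H"
    proof (rule Un_least)
      show "derived_set G H \<subseteq> H" by (rule derived_set_incl[OF subset_refl HH.subgroup_axioms])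
      show "{a [^] p | a. a \<in> H} \<subseteq> H" using sub_pow[OF HH.subgroup_axioms] by blast
    qed
    have "comm_pow_subgroup A p = generate A (derived_set G H \<union> {a [^] p | a. a \<in> H})"
      unfolding comm_pow_subgroup_def by (simp only: s1 s2)
    also have "\<dots> = Phi" unfolding Phi_def A_def
      by (rule generate_consistent[OF sub HH.subgroup_axioms])
    finally show ?thesis .
  qed
  have ker: "kernel A B f \<subseteq> generate A (T \<union> comm_pow_subgroup A p)"
  proof -
    have TPH: "T \<union> Phi \<subseteq> H" using T(2) PhiH by (rule Un_least)
    have e: "generate A (T \<union> comm_pow_subgroup A p) = generate G (T \<union> Phi)"
      unfolding cpA unfolding A_def by (rule generate_consistent[OF TPH HH.subgroup_axioms])
    have "kernel A B f \<subseteq> N"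
    proof
      fix a assume "a \<in> kernel A B f"
      then have a: "a \<in> H" "N #> a = N" unfolding kernel_def A_def B_def f_def using oneQ by auto
      have aG: "a \<in> carrier G" using a(1) HH.subset by blast
      have "a \<in> N #> a" by (rule rcos_self[OF aG NN.subgroup_axioms])
      then show "a \<in> N" unfolding a(2) .
    qed
    also have "N \<subseteq> generate G (T \<union> Phi)" unfolding Ndef normal_closure_def
    proof (rule generate_subgroup_incl)
      have TPG: "T \<union> Phi \<subseteq> carrier G" using TPH HH.subset by blast
      show "subgroup (generate G (T \<union> Phi)) G" by (rule generate_is_subgroup[OF TPG])
      show "{g \<otimes> ya \<otimes> inv g | g ya. g \<in> carrier G \<and> ya \<in> {x [^] (p ^ k)}} \<subseteq> generate G (T \<union> Phi)"
        using T(4) unfolding Phi_def y_def by blast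
    qed
    finally show ?thesis unfolding e .
  qed
  have key: "d_p A p \<le> d_p B p + card T"
    by (rule key_dp[OF gA gB fhom fsurj T(1) _ ker]) (use T(2) HA in simp)
  define I where "I = card (rcosets H)"
  have Ipos: "real I > 0" unfolding I_def using pos by simp
  have pk: "real p ^ k > 0" using p prime_gt_0_nat by simp
  have cT: "real (card T) * real p ^ k \<le> real I" unfolding I_def using T(3) by (metis of_nat_le_iff of_nat_mult of_nat_power)
  have c1: "real (card T) / real I \<le> 1 / real p ^ k"
    using cT Ipos pk by (simp add: divide_simps mult.commute)
  have c2: "real (d_p A p) - 1 - real (card T) \<le> real (d_p B p) - 1" using key by simp
  have "(real (d_p A p) - 1) / real I - 1 / real p ^ k \<le> (real (d_p A p) - 1) / real I - real (card T) / real I"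
    using c1 by simp
  also have "\<dots> = (real (d_p A p) - 1 - real (card T)) / real I" by (simp add: diff_divide_distrib)
  also have "\<dots> \<le> (real (d_p B p) - 1) / real I" using c2 Ipos by (simp add: divide_right_mono)
  finally have fin: "(real (d_p A p) - 1) / real I - 1 / real p ^ k \<le> (real (d_p B p) - 1) / real I" .
  show ?thesis
    by (rule exI[of _ H]) (use nH ppH fin in \<open>simp add: A_def B_def I_def cardeq Q_def\<close>)
qed

lemma lb_val: "(real d - 1) / real I \<ge> -1"
proof (cases "I = 0")
  case True then show ?thesis by simp
next
  case False
  then have I: "real I > 0" by simp
  have "- real I \<le> real d - 1" using False by simp
  then show ?thesis using I by (simp add: le_divide_eq)
qed

lemma rcosets_self_card:
  assumes "group Q"
  shows "rcosets\<^bsub>Q\<^esub> (carrier Q) = {carrier Q}"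
proof -
  interpret Q: group Q by fact
  have "carrier Q #>\<^bsub>Q\<^esub> a = carrier Q" if "a \<in> carrier Q" for a
    by (rule subgroup.rcos_const[OF Q.subgroup_self Q.group_axioms that])
  moreover have "\<one>\<^bsub>Q\<^esub> \<in> carrier Q" by simp
  ultimately show ?thesis unfolding RCOSETS_def by blast
qed

lemma (in group) core:
  fixes p k :: nat
  assumes "True" and "Factorial_Ring.prime p" and "x \<in> carrier G"
  shows "RG_p (G Mod normal_closure G {x [^] (p ^ k)}) p \<ge> RG_p G p - 1 / real p ^ k"
proof -
  define N where "N = normal_closure G {x [^] (p ^ k)}"
  have nN: "N \<lhd> G" unfolding N_def by (rule nc_normal) (use assms(3) in simp)
  interpret NN: normal N G by (rule nN)
  define Q where "Q = G Mod N"
  have gQ: "group Q" unfolding Q_def by (rule NN.factorgroup_is_group)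
  define SG where "SG = {(real (d_p (G\<lparr>carrier := H\<rparr>) p) - 1) / real (card (rcosets H)) | H.
                    H \<lhd> G \<and> p_power_index G p H}"
  define SQ where "SQ = {(real (d_p (Q\<lparr>carrier := K\<rparr>) p) - 1) / real (card (rcosets\<^bsub>Q\<^esub> K)) | K.
                    K \<lhd> Q \<and> p_power_index Q p K}"
  have RG: "RG_p G p = Inf SG" unfolding RG_p_def SG_def ..
  have RQ: "RG_p Q p = Inf SQ" unfolding RG_p_def SQ_def ..
  have bdd: "bdd_below SG" unfolding SG_def by (rule bdd_belowI[of _ "-1"]) (use lb_val in blast)
  have ne: "SQ \<noteq> {}"
  proof -
    have "carrier Q \<lhd> Q" by (rule group.normal_self[OF gQ])
    moreover have "p_power_index Q p (carrier Q)" unfolding p_power_index_def rcosets_self_card[OF gQ]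
      by (intro conjI exI[of _ 0]) simp_all
    ultimately show ?thesis unfolding SQ_def by blast
  qed
  have "RG_p G p - 1 / real p ^ k \<le> Inf SQ"
  proof (rule cInf_greatest[OF ne])
    fix v assume "v \<in> SQ"
    then obtain K where K: "K \<lhd> Q" "p_power_index Q p K"
      "v = (real (d_p (Q\<lparr>carrier := K\<rparr>) p) - 1) / real (card (rcosets\<^bsub>Q\<^esub> K))"
      unfolding SQ_def by blast
    obtain H where H: "H \<lhd> G" "p_power_index G p H"
      "(real (d_p (G\<lparr>carrier := H\<rparr>) p) - 1) / real (card (rcosets H)) - 1 / real p ^ k \<le> v"
      using per_K[OF assms(2,3) N_def K(1,2)[unfolded Q_def]] unfolding K(3) Q_def by blast
    have "Inf SG \<le> (real (d_p (G\<lparr>carrier := H\<rparr>) p) - 1) / real (card (rcosets H))"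
      by (rule cInf_lower[OF _ bdd]) (use H(1,2) in \<open>unfold SG_def, blast\<close>)
    then show "RG_p G p - 1 / real p ^ k \<le> v" using H(3) unfolding RG by linarith
  qed
  then show ?thesis unfolding RQ[unfolded Q_def, symmetric] N_def by simp
qed

theorem theorem3p2:
  fixes G :: "('a, 'b) monoid_scheme" and p k :: nat and x :: 'a
  assumes "group G" and "fin_gen G" and "Factorial_Ring.prime p" and "x \<in> carrier G"
  shows "RG_p (G Mod normal_closure G {x [^]\<^bsub>G\<^esub> (p ^ k)}) p \<ge> RG_p G p - 1 / real p ^ k"
  by (rule group.core[OF assms(1) TrueI assms(3,4)])

end
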